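(* Let $\widehat x=\sum_{m=0}^\infty\sum_{k=0}^{2^m-1}e_{m,k}$ and $y=\sum_{m=0}^\infty\sum_{k=0}^{2^m-1}(-1)^me_{m,k}$ (these belong to $\mathscr X$ and admit the quadratic variation $\langle\widehat x\rangle_t=t=\langle y\rangle_t$ along the dyadic partitions $\mathbb T_n=\{k2^{-n}:k=0,\dots,2^n\}$). Then for all $t\in[0,1]$, $$\lim_{n\to\infty}\langle \widehat x+y\rangle^{2n}_t=\frac43t,\qquad \lim_{n\to\infty}\langle \widehat x+y\rangle^{2n+1}_t=\frac83t,$$ and $$\lim_{n\to\infty}\langle \widehat x,y\rangle^{2n}_t=-\frac13t,\qquad \lim_{n\to\infty}\langle \widehat x,y\rangle^{2n+1}_t=\frac13t.$$ In particular, for $t>0$ the limits of $\langle\widehat x+y\rangle^n_t$ and $\langle\widehat x,y\rangle^n_t$ as $n\to\infty$ do not exist, but $\widehat x+y$ admits different continuous quadratic variations along the two refining sequences $(\mathbb T_{2n})_{n\in\mathbb N}$ and $(\mathbb T_{2n+1})_{n\in\mathbb N}$.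
   Context: The Faber--Schauder functions are $e_{0,0}(t):=(\min\{t,1-t\})^+$ and $e_{m,k}(t):=2^{-m/2}e_{0,0}(2^m t-k)$ for $t\in\mathbb R$, $m\ge1$, $k\in\mathbb Z$. $\mathscr X$ denotes the set of all functions $x\in C[0,1]$ of the form $x=\sum_{m=0}^\infty\sum_{k=0}^{2^m-1}\theta_{m,k}e_{m,k}$ (uniformly convergent series) with $\theta_{m,k}\in\{-1,+1\}$. For $s\in\mathbb T_n$, $s'$ denotes its successor in $\mathbb T_n$ ($s'=\min\{u\in\mathbb T_n:u>s\}$ if $s<1$, $s'=1$ if $s=1$). For $x,z\in C[0,1]$: $\langle x\rangle^n_t:=\sum_{s\in\mathbb T_n,\,s\le t}(x(s')-x(s))^2$ and $\langle x,z\rangle^n_t:=\sum_{s\in\mathbb T_n,\,s\le t}(x(s')-x(s))(z(s')-z(s))$. A function $x$ admits the continuous quadratic variation $\langle x\rangle$ along a refining sequence of partitions $(\mathbb S_n)$ if $\langle x\rangle_t=\lim_n\sum_{s\in\mathbb S_n,s\le t}(x(s')-x(s))^2$ exists for all $t\in[0,1]$ and is continuous in $t$. *)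

theory Defs
  imports "HOL-Analysis.Analysis"
begin

definition fs00 :: "real \<Rightarrow> real" where
  "fs00 t = max (min t (1 - t)) 0"

definition fs :: "nat \<Rightarrow> int \<Rightarrow> real \<Rightarrow> real" where
  "fs m k t = 2 powr (- real m / 2) * fs00 (2 ^ m * t - real_of_int k)"

definition xhat :: "real \<Rightarrow> real" where
  "xhat t = (\<Sum>m. \<Sum>k<(2::nat) ^ m. fs m (int k) t)"

definition yfun :: "real \<Rightarrow> real" where
  "yfun t = (\<Sum>m. \<Sum>k<(2::nat) ^ m. (-1) ^ m * fs m (int k) t)"

definition dyadic :: "nat \<Rightarrow> real set" where
  "dyadic n = (\<lambda>k. real k / 2 ^ n) ` {0..2 ^ n}"

definition succ_pt :: "real set \<Rightarrow> real \<Rightarrow> real" where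
  "succ_pt S s = (if s < 1 then Min {u \<in> S. u > s} else 1)"

definition qv_sum :: "real set \<Rightarrow> (real \<Rightarrow> real) \<Rightarrow> real \<Rightarrow> real" where
  "qv_sum S x t = (\<Sum>s\<in>{s \<in> S. s \<le> t}. (x (succ_pt S s) - x s) ^ 2)"

definition cv_sum :: "real set \<Rightarrow> (real \<Rightarrow> real) \<Rightarrow> (real \<Rightarrow> real) \<Rightarrow> real \<Rightarrow> real" where
  "cv_sum S x z t = (\<Sum>s\<in>{s \<in> S. s \<le> t}. (x (succ_pt S s) - x s) * (z (succ_pt S s) - z s))"

definition admits_cqv :: "(nat \<Rightarrow> real set) \<Rightarrow> (real \<Rightarrow> real) \<Rightarrow> (real \<Rightarrow> real) \<Rightarrow> bool" where
  "admits_cqv S x q \<longleftrightarrow>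
     (\<forall>t\<in>{0..1}. (\<lambda>n. qv_sum (S n) x t) \<longlonglongrightarrow> q t) \<and> continuous_on {0..1} q"

end

theory Submission
  imports Defs "HOL-Real_Asymp.Real_Asymp"
begin



definition tri :: "nat \<Rightarrow> nat \<Rightarrow> real" where
  "tri h s = (if s \<le> h then real s else real (2*h) - real s)"

lemma neg1_pow: "(-1::real) ^ n = (if even n then 1 else -1)"
  by simp

lemma alt_sum:
  fixes h c J :: nat assumes h: "h > 0" and c: "c > 0"
  shows "(\<Sum>j<J. (-1::real)^(j div (2*h*c)) * (-1)^(j div h))
          = (-1)^(J div (2*h*c)) * tri h (J mod (2*h))"
proof (induction J)
  case 0 show ?case by (simp add: tri_def)
next
  case (Suc J)
  define s where "s = J mod (2*h)"
  have sP: "s < 2*h" using h by (simp add: s_def)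
  have ev: "even (J div h) \<longleftrightarrow> s < h"
  proof -
    have "s = h*(J div h mod 2) + J mod h"
      using mod_mult2_eq[of J h 2] by (simp add: s_def mult.commute)
    moreover have "J mod h < h" using h by simp
    moreover have "J div h mod 2 = 0 \<or> J div h mod 2 = 1" by auto
    ultimately show ?thesis by (auto simp: even_iff_mod_2_eq_zero)
  qed
  have par: "(-1::real)^(J div h) = (if s < h then 1 else -1)"
    using ev by simp
  have dd: "\<And>x. x div (2*h*c) = x div (2*h) div c" by (simp add: div_mult2_eq)
  show ?case
  proof (cases "Suc s = 2*h")
    case True
    then have m0: "Suc J mod (2*h) = 0" by (simp add: mod_Suc s_def)
    have "tri h s = 1" using True h by (simp add: tri_def) presburger
    moreover have "\<not> s < h" using True h by simp
    ultimately show ?thesis using Suc.IH par m0 by (simp add: s_def tri_def)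
  next
    case False
    then have m1: "Suc J mod (2*h) = Suc s" by (simp add: mod_Suc s_def)
    have "(Suc J div (2*h)) * (2*h) = (J div (2*h)) * (2*h)"
      using m1 div_mult_mod_eq[of J "2*h"] div_mult_mod_eq[of "Suc J" "2*h"] unfolding s_def by linarith
    then have d1: "Suc J div (2*h) = J div (2*h)" using h by simp
    have d2: "Suc J div (2*h*c) = J div (2*h*c)" using d1 dd by metis
    have "tri h (Suc s) = tri h s + (if s < h then 1 else -1)"
      using False sP by (auto simp: tri_def)
    then show ?thesis using Suc.IH par m1 d2
      by (simp add: s_def algebra_simps)
  qed
qed

lemma tri_bound: "s < 2*h \<Longrightarrow> \<bar>tri h s\<bar> \<le> real h"
  by (auto simp: tri_def)

lemma alt_sum_bound:
  fixes h c J :: nat assumes h: "h > 0" and c: "c > 0"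
  shows "\<bar>\<Sum>j<J. (-1::real)^(j div (2*h*c)) * (-1)^(j div h)\<bar> \<le> real h"
proof -
  have "\<bar>(-1::real)^(J div (2*h*c))\<bar> = 1" by simp
  moreover have "\<bar>tri h (J mod (2*h))\<bar> \<le> real h" using h by (intro tri_bound) simp
  ultimately show ?thesis unfolding alt_sum[OF h c] by (simp add: abs_mult)
qed




definition sg :: "nat \<Rightarrow> nat \<Rightarrow> nat \<Rightarrow> real" where
  "sg n m j = (-1::real)^(j div 2^(n-1-m))"

definition D :: "(nat \<Rightarrow> real) \<Rightarrow> nat \<Rightarrow> nat \<Rightarrow> real" where
  "D th n j = (\<Sum>m<n. th m * sqrt (2^m) * sg n m j) / 2^n"

lemma sqrt_pow_le: "m \<le> m' \<Longrightarrow> sqrt (2^m) * sqrt (2^m') \<le> (2::real)^m'"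
proof -
  assume "m \<le> m'"
  then have "sqrt (2^m) \<le> sqrt ((2::real)^m')" by simp
  then have "sqrt (2^m) * sqrt (2^m') \<le> sqrt ((2::real)^m') * sqrt (2^m')"
    by (intro mult_right_mono) auto
  also have "\<dots> = 2^m'" by simp
  finally show ?thesis .
qed

lemma offdiag_lt:
  assumes "m < m'" "m' < n"
  shows "\<bar>\<Sum>j<J. sg n m j * sg n m' j\<bar> * (sqrt (2^m) * sqrt (2^m')) \<le> 2^n"
proof -
  define h :: nat where "h = 2^(n-1-m')"
  define c :: nat where "c = 2^(m'-m-1)"
  have e: "(2::nat)^(n-1-m) = 2*h*c"
  proof -
    have eq: "n-1-m = Suc ((n-1-m') + (m'-m-1))" using assms by simp
    have "(2::nat)^(n-1-m) = 2^(Suc ((n-1-m') + (m'-m-1)))" by (subst eq) (rule refl)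
    also have "\<dots> = 2*h*c" by (simp only: power_Suc power_add h_def c_def mult.assoc)
    finally show ?thesis .
  qed
  have "\<bar>\<Sum>j<J. sg n m j * sg n m' j\<bar> \<le> real h"
    unfolding sg_def e h_def[symmetric] by (rule alt_sum_bound) (auto simp: h_def c_def)
  moreover have "sqrt (2^m) * sqrt (2^m') \<le> (2::real)^m'" using assms by (intro sqrt_pow_le) simp
  ultimately have "\<bar>\<Sum>j<J. sg n m j * sg n m' j\<bar> * (sqrt (2^m) * sqrt (2^m')) \<le> real h * 2^m'"
    by (intro mult_mono) auto
  also have "real h * 2^m' = 2^(n-1)"
  proof -
    have "n - 1 = (n-1-m') + m'" using assms by simp
    then show ?thesis by (simp add: h_def power_add[symmetric])
  qed
  also have "(2::real)^(n-1) \<le> 2^n" by (intro power_increasing) auto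
  finally show ?thesis .
qed

lemma offdiag:
  assumes "m \<noteq> m'" "m < n" "m' < n"
  shows "\<bar>\<Sum>j<J. sg n m j * sg n m' j\<bar> * (sqrt (2^m) * sqrt (2^m')) \<le> 2^n"
proof (cases "m < m'")
  case True then show ?thesis using offdiag_lt assms by blast
next
  case False
  then have "m' < m" using assms by simp
  from offdiag_lt[OF this assms(2), of J] show ?thesis
    by (simp add: mult.commute)
qed

lemma main_est:
  assumes th: "\<And>m. \<bar>th m\<bar> \<le> 2" and ph: "\<And>m. \<bar>ph m\<bar> \<le> 2"
  shows "\<bar>(\<Sum>j<J. D th n j * D ph n j) - real J / 2^n * ((\<Sum>m<n. th m * ph m * 2^m) / 2^n)\<bar>
          \<le> 4 * real n^2 / 2^n"
proof -
  define S where "S m m' = (\<Sum>j<J. sg n m j * sg n m' j)" for m m'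
  define T where "T m m' = th m * ph m' * (sqrt (2^m) * sqrt (2^m')) * S m m'" for m m'
  have "(\<Sum>j<J. D th n j * D ph n j)
      = (\<Sum>j<J. \<Sum>m<n. \<Sum>m'<n. (th m * sqrt (2^m) * sg n m j) * (ph m' * sqrt (2^m') * sg n m' j)) / (2^n * 2^n)"
    unfolding D_def by (simp add: sum_product sum_divide_distrib)
  also have "(\<Sum>j<J. \<Sum>m<n. \<Sum>m'<n. (th m * sqrt (2^m) * sg n m j) * (ph m' * sqrt (2^m') * sg n m' j))
      = (\<Sum>m<n. \<Sum>m'<n. T m m')"
    unfolding T_def S_def
    by (simp add: sum.swap[of _ "{..<J}"] sum_distrib_left mult_ac)
  finally have eq1: "(\<Sum>j<J. D th n j * D ph n j) = (\<Sum>m<n. \<Sum>m'<n. T m m') / (2^n * 2^n)" .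
  have split: "(\<Sum>m<n. \<Sum>m'<n. T m m') = (\<Sum>m<n. T m m) + (\<Sum>m<n. \<Sum>m'\<in>{..<n}-{m}. T m m')"
  proof -
    have "\<And>m. m < n \<Longrightarrow> (\<Sum>m'<n. T m m') = T m m + (\<Sum>m'\<in>{..<n}-{m}. T m m')"
      by (subst sum.remove[of _ m]) auto
    then show ?thesis by (simp add: sum.distrib)
  qed
  have diag: "T m m = th m * ph m * 2^m * real J" for m
  proof -
    have "S m m = real J" unfolding S_def sg_def
      by (simp add: power_mult_distrib[symmetric])
    then show ?thesis unfolding T_def by simp
  qed
  have offb: "\<bar>T m m'\<bar> \<le> 4 * 2^n" if "m < n" "m' < n" "m \<noteq> m'" for m m'
  proof -
    have "\<bar>T m m'\<bar> = (\<bar>th m\<bar> * \<bar>ph m'\<bar>) * (\<bar>S m m'\<bar> * (sqrt (2^m) * sqrt (2^m')))"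
      unfolding T_def by (simp add: abs_mult mult_ac)
    also have "\<dots> \<le> 4 * 2^n"
    proof -
      have "\<bar>th m\<bar> * \<bar>ph m'\<bar> \<le> 2 * 2" using th[of m] ph[of m'] by (intro mult_mono) auto
      then show ?thesis using offdiag[OF that(3,1,2), of J] unfolding S_def
        by (intro mult_mono) auto
    qed
    finally show ?thesis .
  qed
  have "\<bar>\<Sum>m<n. \<Sum>m'\<in>{..<n}-{m}. T m m'\<bar> \<le> (\<Sum>m<n. \<Sum>m'\<in>{..<n}-{m}. \<bar>T m m'\<bar>)"
    by (rule order_trans[OF sum_abs]) (intro sum_mono sum_abs)
  also have "\<dots> \<le> (\<Sum>m<n. \<Sum>m'<n. 4 * 2^n)"
  proof (intro sum_mono)
    fix m assume m: "m \<in> {..<n}"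
    have "(\<Sum>m'\<in>{..<n}-{m}. \<bar>T m m'\<bar>) \<le> (\<Sum>m'\<in>{..<n}-{m}. 4 * 2^n)"
      using m offb by (intro sum_mono) auto
    also have "\<dots> \<le> (\<Sum>m'<n. 4 * 2^n)" by (intro sum_mono2) auto
    finally show "(\<Sum>m'\<in>{..<n}-{m}. \<bar>T m m'\<bar>) \<le> (\<Sum>m'<n. 4 * 2^n)" .
  qed
  also have "\<dots> = real n^2 * 4 * 2^n" by (simp add: power2_eq_square)
  finally have offsum: "\<bar>\<Sum>m<n. \<Sum>m'\<in>{..<n}-{m}. T m m'\<bar> \<le> real n^2 * 4 * 2^n" .
  have diagsum: "(\<Sum>m<n. T m m) / (2^n * 2^n) = real J / 2^n * ((\<Sum>m<n. th m * ph m * 2^m) / 2^n)"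
    unfolding diag by (simp add: sum_distrib_left sum_distrib_right field_simps)
  have "(\<Sum>j<J. D th n j * D ph n j) - real J / 2^n * ((\<Sum>m<n. th m * ph m * 2^m) / 2^n)
       = (\<Sum>m<n. \<Sum>m'\<in>{..<n}-{m}. T m m') / (2^n * 2^n)"
    unfolding eq1 split diagsum[symmetric] by (simp add: add_divide_distrib)
  also have "\<bar>\<dots>\<bar> \<le> real n^2 * 4 * 2^n / (2^n * 2^n)"
    unfolding abs_divide using offsum by (simp only: abs_mult power_abs abs_numeral) (intro divide_right_mono, auto)
  also have "\<dots> = 4 * real n^2 / 2^n" by simp
  finally show ?thesis .
qed




definition pt :: "nat \<Rightarrow> nat \<Rightarrow> real" where "pt n j = real j / 2^n"
definition Vm :: "nat \<Rightarrow> nat \<Rightarrow> nat \<Rightarrow> real" where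
  "Vm m n j = (\<Sum>k<(2::nat)^m. fs m (int k) (pt n j))"
definition Z :: "(nat \<Rightarrow> real) \<Rightarrow> real \<Rightarrow> real" where
  "Z th t = (\<Sum>m. \<Sum>k<(2::nat)^m. th m * fs m (int k) t)"

lemma fs00_out: "y \<le> 0 \<or> 1 \<le> y \<Longrightarrow> fs00 y = 0"
  by (auto simp: fs00_def)

lemma fs00_int: "fs00 (real_of_int z) = 0"
  by (rule fs00_out) (cases "z \<le> 0"; simp)

lemma fs_zero:
  assumes "n \<le> m" shows "fs m k (pt n j) = 0"
proof -
  have "(2::real)^m * pt n j = real (j * 2^(m-n))"
  proof -
    have "(2::real)^m = 2^(m-n) * 2^n" using assms by (simp add: power_add[symmetric])
    then show ?thesis by (simp add: pt_def)
  qed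
  then have "2^m * pt n j - real_of_int k = real_of_int (int (j * 2^(m-n)) - k)" by simp
  then show ?thesis unfolding fs_def by (simp only: fs00_int)
qed

lemma Z_pt: "Z th (pt n j) = (\<Sum>m<n. th m * Vm m n j)"
  unfolding Z_def Vm_def
  by (subst suminf_finite[of "{..<n}"]) (auto simp: fs_zero sum_distrib_left)

lemma sum_fs00:
  fixes q m :: nat and x :: real
  assumes "q < 2^m" "real q \<le> x" "x \<le> real q + 1"
  shows "(\<Sum>k<(2::nat)^m. fs00 (x - real k)) = fs00 (x - real q)"
proof -
  have "(\<Sum>k<(2::nat)^m. fs00 (x - real k)) = fs00 (x - real q) + (\<Sum>k\<in>{..<2^m}-{q}. fs00 (x - real k))"
    using assms by (subst sum.remove[of _ q]) auto
  also have "(\<Sum>k\<in>{..<2^m}-{q}. fs00 (x - real k)) = 0"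
  proof (intro sum.neutral ballI)
    fix k assume "k \<in> {..<2^m}-{q}"
    then have "k < q \<or> k > q" by auto
    then have "real k + 1 \<le> real q \<or> real k \<ge> real q + 1" by auto
    then show "fs00 (x - real k) = 0" using assms by (intro fs00_out) auto
  qed
  finally show ?thesis by simp
qed

lemma powr_neg_half: "(2::real) powr (- real m / 2) = 1 / sqrt (2^m)"
proof -
  have a: "sqrt ((2::real)^m) = 2 powr (real m / 2)"
    by (metis powr_half_sqrt_powr powr_realpow zero_le_numeral zero_less_numeral)
  have b: "- real m / 2 = - (real m / 2)" by simp
  show ?thesis unfolding a b by (rule powr_minus_divide)
qed

lemma fs00_left: "0 \<le> y \<Longrightarrow> y \<le> 1/2 \<Longrightarrow> fs00 y = y"
  by (simp add: fs00_def)
lemma fs00_right: "1/2 \<le> y \<Longrightarrow> y \<le> 1 \<Longrightarrow> fs00 y = 1 - y"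
  by (simp add: fs00_def)

lemma aux_field: "s > 0 \<Longrightarrow> a > 0 \<Longrightarrow> 1 / s * (g / a) = s * g / ((s * s) * (a::real))"
  by (simp add: field_simps)

lemma V_diff:
  assumes mn: "m < n" and jn: "j < 2^n"
  shows "Vm m n (Suc j) - Vm m n j = sqrt (2^m) * sg n m j / 2^n"
proof -
  define a :: nat where "a = 2^(n-m)"
  define b :: nat where "b = 2^(n-1-m)"
  define q where "q = j div a"
  define r where "r = j mod a"
  have nm: "n - m = Suc (n-1-m)" using mn by simp
  have ab: "a = b*2" unfolding a_def b_def nm by (simp only: power_Suc mult.commute)
  have bpos: "b > 0" by (simp add: b_def)
  have apos: "a > 0" using ab bpos by simp
  have n_nat: "(2::nat)^n = 2^m * a"
  proof -
    have "n = m + (n-m)" using mn by simp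
    then show ?thesis unfolding a_def by (metis power_add)
  qed
  have n_eq: "(2::real)^n = 2^m * real a"
    using arg_cong[OF n_nat, of real] by simp
  have jqr: "real j = real a * real q + real r"
    unfolding q_def r_def by (metis div_mult_mod_eq of_nat_add of_nat_mult mult.commute)
  have rA: "r < a" using apos by (simp add: r_def)
  have qm: "q < 2^m"
  proof -
    have "j < a * 2^m" using jn n_nat by (simp add: mult.commute)
    then show ?thesis unfolding q_def by (simp add: div_less_iff_less_mult apos mult.commute)
  qed
  have ra: "real a > 0" using apos by simp
  have x0: "2^m * pt n j = real q + real r / real a"
  proof -
    have "2^m * pt n j = real j / real a" unfolding pt_def n_eq using ra by simp
    also have "\<dots> = real q + real r / real a" unfolding jqr using ra by (simp add: add_divide_distrib)
    finally show ?thesis .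
  qed
  have x1: "2^m * pt n (Suc j) = real q + (real r + 1) / real a"
  proof -
    have "2^m * pt n (Suc j) = (real j + 1) / real a" unfolding pt_def n_eq using ra by simp
    also have "\<dots> = real q + (real r + 1) / real a" unfolding jqr using ra by (simp add: add_divide_distrib)
    finally show ?thesis .
  qed
  have fsx: "fs m (int k) t = 2 powr (- real m / 2) * fs00 (2^m * t - real k)" for k t
    by (simp add: fs_def)
  have V: "Vm m n i = 2 powr (- real m / 2) * (\<Sum>k<(2::nat)^m. fs00 (2^m * pt n i - real k))" for i
    unfolding Vm_def fsx by (simp add: sum_distrib_left)
  have rle: "(real r + 1) / real a \<le> 1" using rA ra by simp
  have r0: "real r / real a \<le> 1" using rA ra by simp
  have "Vm m n j = 2 powr (- real m / 2) * fs00 (real r / real a)"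
    unfolding V x0 using r0 by (subst sum_fs00[OF qm]) auto
  moreover have "Vm m n (Suc j) = 2 powr (- real m / 2) * fs00 ((real r + 1) / real a)"
    unfolding V x1 using rle by (subst sum_fs00[OF qm]) auto
  moreover have ev: "even (j div b) \<longleftrightarrow> r < b"
  proof -
    have "r = b*(j div b mod 2) + j mod b"
      using mod_mult2_eq[of j b 2] by (simp add: r_def ab)
    moreover have "j mod b < b" using bpos by simp
    moreover have "j div b mod 2 = 0 \<or> j div b mod 2 = 1" by auto
    ultimately show ?thesis by (auto simp: even_iff_mod_2_eq_zero)
  qed
  moreover have "fs00 ((real r + 1) / real a) - fs00 (real r / real a) = (if r < b then 1 else -1) / real a"
  proof (cases "r < b")
    case True
    then have "real r + 1 \<le> real b" by simp
    then have h: "(real r + 1) / real a \<le> 1/2" using ab ra by (simp add: divide_simps)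
    have "fs00 ((real r + 1) / real a) = (real r + 1) / real a"
      using h ra by (intro fs00_left) auto
    moreover have "fs00 (real r / real a) = real r / real a"
      using h ra by (intro fs00_left) auto
    ultimately show ?thesis using True ra by (simp add: field_simps)
  next
    case False
    then have "real r \<ge> real b" by simp
    then have h: "real r / real a \<ge> 1/2" using ab ra by (simp add: divide_simps)
    have "fs00 ((real r + 1) / real a) = 1 - (real r + 1) / real a"
      using h rle ra by (intro fs00_right) (auto simp: divide_simps)
    moreover have "fs00 (real r / real a) = 1 - real r / real a"
      using h r0 by (intro fs00_right) auto
    ultimately show ?thesis using False ra by (simp add: field_simps)
  qed
  moreover have "sg n m j = (if r < b then 1 else -1)"
    unfolding sg_def using ev by (simp add: b_def)
  ultimately have "Vm m n (Suc j) - Vm m n j = 2 powr (- real m / 2) * (sg n m j / real a)"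
    by (simp add: right_diff_distrib[symmetric])
  also have "\<dots> = sqrt (2^m) * sg n m j / 2^n"
  proof -
    have s2: "(2::real)^m = sqrt (2^m) * sqrt (2^m)" by simp
    have "sqrt ((2::real)^m) > 0" by simp
    from aux_field[OF this ra, of "sg n m j"] show ?thesis
      unfolding powr_neg_half n_eq by (subst s2) 
  qed
  finally show ?thesis .
qed

lemma Z_diff:
  assumes "j < 2^n"
  shows "Z th (pt n (Suc j)) - Z th (pt n j) = D th n j"
proof -
  have "Z th (pt n (Suc j)) - Z th (pt n j) = (\<Sum>m<n. th m * (Vm m n (Suc j) - Vm m n j))"
    unfolding Z_pt by (simp add: sum_subtractf right_diff_distrib)
  also have "\<dots> = (\<Sum>m<n. th m * (sqrt (2^m) * sg n m j / 2^n))"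
    using assms by (intro sum.cong) (auto simp: V_diff)
  also have "\<dots> = D th n j" unfolding D_def by (simp add: sum_divide_distrib mult_ac)
  finally show ?thesis .
qed




definition Jn :: "nat \<Rightarrow> real \<Rightarrow> nat" where
  "Jn n t = min (2^n) (nat \<lfloor>t * 2^n\<rfloor> + 1)"

lemma Jn_iff: assumes "0 \<le> t" shows "j < Jn n t \<longleftrightarrow> j < 2^n \<and> pt n j \<le> t"
proof -
  have "j < nat \<lfloor>t * 2^n\<rfloor> + 1 \<longleftrightarrow> real j \<le> t * 2^n"
  proof -
    have f0: "0 \<le> \<lfloor>t * 2^n\<rfloor>" using assms by simp
    have "j < nat \<lfloor>t * 2^n\<rfloor> + 1 \<longleftrightarrow> j \<le> nat \<lfloor>t * 2^n\<rfloor>" by (simp add: less_Suc_eq_le)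
    also have "\<dots> \<longleftrightarrow> int j \<le> \<lfloor>t * 2^n\<rfloor>" using f0 by (simp add: le_nat_iff)
    also have "\<dots> \<longleftrightarrow> real j \<le> t * 2^n" by (simp add: le_floor_iff)
    finally show ?thesis .
  qed
  moreover have "pt n j \<le> t \<longleftrightarrow> real j \<le> t * 2^n" by (simp add: pt_def divide_le_eq)
  ultimately show ?thesis by (auto simp: Jn_def)
qed

lemma Jn_bounds: assumes "0 \<le> t" "t \<le> 1"
  shows "t * 2^n \<le> real (Jn n t)" "real (Jn n t) \<le> t * 2^n + 1"
proof -
  have f0: "0 \<le> \<lfloor>t * 2^n\<rfloor>" using assms by simp
  have e: "real (nat \<lfloor>t * 2^n\<rfloor> + 1) = real_of_int \<lfloor>t * 2^n\<rfloor> + 1" using f0 by simp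
  have f1: "t * 2^n < real (nat \<lfloor>t * 2^n\<rfloor> + 1)" unfolding e by linarith
  have f2: "real (nat \<lfloor>t * 2^n\<rfloor> + 1) \<le> t * 2^n + 1" unfolding e by linarith
  have f3: "t * 2^n \<le> (2::real)^n" using assms by simp
  show "t * 2^n \<le> real (Jn n t)"
    using f1 f3 by (auto simp: Jn_def min_def)
  have "Jn n t \<le> nat \<lfloor>t*2^n\<rfloor> + 1" by (simp add: Jn_def)
  then have "real (Jn n t) \<le> real (nat \<lfloor>t*2^n\<rfloor> + 1)" by (simp only: of_nat_le_iff)
  then show "real (Jn n t) \<le> t * 2^n + 1" using f2 by linarith
qed

lemma Jn_lim: assumes "0 \<le> t" "t \<le> 1"
  shows "(\<lambda>n. real (Jn n t) / 2^n) \<longlonglongrightarrow> t"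
proof (rule tendsto_sandwich[of "\<lambda>_. t" _ _ "\<lambda>n. t + 1 / 2^n"])
  show "\<forall>\<^sub>F n in sequentially. t \<le> real (Jn n t) / 2 ^ n"
    using Jn_bounds(1)[OF assms] by (simp add: le_divide_eq)
  show "\<forall>\<^sub>F n in sequentially. real (Jn n t) / 2 ^ n \<le> t + 1 / 2 ^ n"
    using Jn_bounds(2)[OF assms] by (simp add: divide_le_eq algebra_simps)
  show "(\<lambda>_. t) \<longlonglongrightarrow> t" by simp
  show "(\<lambda>n. t + 1 / 2 ^ n) \<longlonglongrightarrow> t" by real_asymp
qed

lemma pt_inj: "inj (pt n)" unfolding inj_def pt_def by simp

lemma pt_lt1: "j < 2^n \<Longrightarrow> pt n j < 1" by (simp add: pt_def)

lemma dyadic_pt: "dyadic n = pt n ` {0..2^n}"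
  unfolding dyadic_def pt_def by simp

lemma succ_dy: assumes "j < 2^n" shows "succ_pt (dyadic n) (pt n j) = pt n (Suc j)"
proof -
  have "Min {u \<in> dyadic n. u > pt n j} = pt n (Suc j)"
  proof (rule Min_eqI)
    show "finite {u \<in> dyadic n. u > pt n j}" by (simp add: dyadic_pt)
    show "pt n (Suc j) \<in> {u \<in> dyadic n. u > pt n j}"
      using assms unfolding dyadic_pt by (auto intro!: rev_image_eqI[of "Suc j"] simp: pt_def divide_strict_right_mono)
    fix y assume "y \<in> {u \<in> dyadic n. u > pt n j}"
    then obtain i where y: "y = pt n i" "pt n j < pt n i" by (auto simp: dyadic_pt)
    then have "real j < real i" by (simp add: pt_def divide_less_cancel)
    then have "j < i" by simp
    then show "pt n (Suc j) \<le> y" using y by (simp add: pt_def divide_right_mono)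
  qed
  then show ?thesis using pt_lt1[OF assms] by (simp add: succ_pt_def)
qed

lemma succ_one: "succ_pt S 1 = 1" by (simp add: succ_pt_def)

lemma dyadic_sum:
  assumes t: "0 \<le> t" "t \<le> 1" and F: "F 1 1 = 0"
  shows "(\<Sum>s\<in>{s \<in> dyadic n. s \<le> t}. F s (succ_pt (dyadic n) s))
         = (\<Sum>j<Jn n t. F (pt n j) (pt n (Suc j)))"
proof -
  define B where "B = {j. j \<le> 2^n \<and> pt n j \<le> t}"
  have set: "{s \<in> dyadic n. s \<le> t} = pt n ` B" unfolding B_def dyadic_pt by auto
  have "(\<Sum>s\<in>{s \<in> dyadic n. s \<le> t}. F s (succ_pt (dyadic n) s))
      = (\<Sum>j\<in>B. F (pt n j) (succ_pt (dyadic n) (pt n j)))"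
    unfolding set by (subst sum.reindex) (auto intro: inj_on_subset[OF pt_inj])
  also have "\<dots> = (\<Sum>j<Jn n t. F (pt n j) (pt n (Suc j)))"
  proof (rule sum.mono_neutral_cong_right)
    show "finite B" unfolding B_def by simp
    show "{..<Jn n t} \<subseteq> B" using Jn_iff[OF t(1)] by (auto simp: B_def)
    show "\<forall>i\<in>B - {..<Jn n t}. F (pt n i) (succ_pt (dyadic n) (pt n i)) = 0"
    proof
      fix i assume "i \<in> B - {..<Jn n t}"
      then have "i = 2^n" using Jn_iff[OF t(1), of i n] by (auto simp: B_def)
      then have "pt n i = 1" by (simp add: pt_def)
      then show "F (pt n i) (succ_pt (dyadic n) (pt n i)) = 0" by (simp add: succ_one F)
    qed
    show "F (pt n x) (succ_pt (dyadic n) (pt n x)) = F (pt n x) (pt n (Suc x))" if "x \<in> {..<Jn n t}" for x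
      using that Jn_iff[OF t(1), of x n] by (simp add: succ_dy)
  qed
  finally show ?thesis .
qed

lemma xhat_Z: "xhat = Z (\<lambda>_. 1)" unfolding xhat_def Z_def by (rule ext) simp
lemma yfun_Z: "yfun = Z (\<lambda>m. (-1)^m)" unfolding yfun_def Z_def by (rule ext) simp

lemma D_add: "D th n j + D ph n j = D (\<lambda>m. th m + ph m) n j"
  unfolding D_def by (simp add: sum.distrib[symmetric] add_divide_distrib[symmetric] algebra_simps)

lemma qv_D:
  assumes "0 \<le> t" "t \<le> 1"
  shows "qv_sum (dyadic n) (\<lambda>s. xhat s + yfun s) t
    = (\<Sum>j<Jn n t. D (\<lambda>m. 1 + (-1)^m) n j * D (\<lambda>m. 1 + (-1)^m) n j)"
  unfolding qv_sum_def
  apply (subst dyadic_sum[OF assms, where F = "\<lambda>s s'. (xhat s' + yfun s' - (xhat s + yfun s))^2"])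
   apply simp
  apply (intro sum.cong refl)
  subgoal for j
    using Jn_iff[OF assms(1), of j n]
    by (simp add: power2_eq_square xhat_Z yfun_Z Z_diff D_add[symmetric] algebra_simps
        flip: Z_diff)
  done

lemma cv_D:
  assumes "0 \<le> t" "t \<le> 1"
  shows "cv_sum (dyadic n) xhat yfun t
    = (\<Sum>j<Jn n t. D (\<lambda>_. 1) n j * D (\<lambda>m. (-1)^m) n j)"
  unfolding cv_sum_def
  apply (subst dyadic_sum[OF assms, where F = "\<lambda>s s'. (xhat s' - xhat s) * (yfun s' - yfun s)"])
   apply simp
  apply (intro sum.cong refl)
  subgoal for j
    using Jn_iff[OF assms(1), of j n]
    by (simp add: xhat_Z yfun_Z Z_diff)
  done




lemma lim_gen:
  assumes th: "\<And>m. \<bar>th m\<bar> \<le> 2" and ph: "\<And>m. \<bar>ph m\<bar> \<le> 2"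
    and t: "0 \<le> t" "t \<le> 1" and sm: "strict_mono \<sigma>"
    and L: "(\<lambda>N. (\<Sum>m<\<sigma> N. th m * ph m * 2^m) / 2^(\<sigma> N)) \<longlonglongrightarrow> L"
  shows "(\<lambda>N. \<Sum>j<Jn (\<sigma> N) t. D th (\<sigma> N) j * D ph (\<sigma> N) j) \<longlonglongrightarrow> t * L"
proof -
  define X where "X n = (\<Sum>j<Jn n t. D th n j * D ph n j)" for n
  define A where "A n = real (Jn n t) / 2^n" for n
  define C where "C n = (\<Sum>m<n. th m * ph m * 2^m) / 2^n" for n
  have est: "\<bar>X n - A n * C n\<bar> \<le> 4 * real n^2 / 2^n" for n
    unfolding X_def A_def C_def by (rule main_est[OF th ph])
  have e0: "(\<lambda>n. 4 * real n^2 / 2^n) \<longlonglongrightarrow> 0" by real_asymp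
  have d0: "(\<lambda>n. X n - A n * C n) \<longlonglongrightarrow> 0"
  proof (rule Lim_null_comparison[OF _ e0])
    show "\<forall>\<^sub>F n in sequentially. norm (X n - A n * C n) \<le> 4 * real n^2 / 2^n"
      using est by simp
  qed
  have d1: "(\<lambda>N. X (\<sigma> N) - A (\<sigma> N) * C (\<sigma> N)) \<longlonglongrightarrow> 0"
    using LIMSEQ_subseq_LIMSEQ[OF d0 sm] by (simp add: o_def)
  have a1: "(\<lambda>N. A (\<sigma> N)) \<longlonglongrightarrow> t"
    using LIMSEQ_subseq_LIMSEQ[OF Jn_lim[OF t] sm] by (simp add: o_def A_def)
  have c1: "(\<lambda>N. C (\<sigma> N)) \<longlonglongrightarrow> L" using L by (simp add: C_def)
  have "(\<lambda>N. (X (\<sigma> N) - A (\<sigma> N) * C (\<sigma> N)) + A (\<sigma> N) * C (\<sigma> N)) \<longlonglongrightarrow> 0 + t * L"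
    by (intro tendsto_intros d1 a1 c1)
  then show ?thesis by (simp add: X_def)
qed

lemma sum_even: "(\<Sum>m<2*N. (1 + (-1::real)^m) * (1 + (-1)^m) * 2^m) = 4 * (4^N - 1) / 3"
proof (induction N)
  case 0 then show ?case by simp
next
  case (Suc N)
  have "2 * Suc N = Suc (Suc (2*N))" by simp
  then have "(\<Sum>m<2*Suc N. (1 + (-1::real)^m) * (1 + (-1)^m) * 2^m)
     = (\<Sum>m<2*N. (1 + (-1::real)^m) * (1 + (-1)^m) * 2^m) + 4 * 4^N"
    by (simp add: power_mult)
  then show ?case using Suc.IH by simp
qed

lemma sum_odd: "(\<Sum>m<2*N+1. (1 + (-1::real)^m) * (1 + (-1)^m) * 2^m) = 4 * (4^N - 1) / 3 + 4 * 4^N"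
  using sum_even[of N] by (simp add: power_mult)

lemma sum_alt_even: "(\<Sum>m<2*N. 1 * (-1::real)^m * 2^m) = (1 - 4^N) / 3"
proof (induction N)
  case 0 then show ?case by simp
next
  case (Suc N)
  have "2 * Suc N = Suc (Suc (2*N))" by simp
  then have "(\<Sum>m<2*Suc N. 1 * (-1::real)^m * 2^m) = (\<Sum>m<2*N. 1 * (-1::real)^m * 2^m) - 4^N"
    by (simp add: power_mult)
  then show ?case using Suc.IH by simp
qed

lemma sum_alt_odd: "(\<Sum>m<2*N+1. 1 * (-1::real)^m * 2^m) = (1 - 4^N) / 3 + 4^N"
  using sum_alt_even[of N] by (simp add: power_mult)

lemma pow2N: "(2::real)^(2*N) = 4^N" by (simp add: power_mult)
lemma pow2N1: "(2::real)^(2*N+1) = 2 * 4^N" by (simp add: power_mult)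

lemma L1: "(\<lambda>N. (\<Sum>m<2*N. (1 + (-1::real)^m) * (1 + (-1)^m) * 2^m) / 2^(2*N)) \<longlonglongrightarrow> 4/3"
  unfolding sum_even pow2N by real_asymp
lemma L2: "(\<lambda>N. (\<Sum>m<2*N+1. (1 + (-1::real)^m) * (1 + (-1)^m) * 2^m) / 2^(2*N+1)) \<longlonglongrightarrow> 8/3"
  unfolding sum_odd pow2N1 by real_asymp
lemma L3: "(\<lambda>N. (\<Sum>m<2*N. 1 * (-1::real)^m * 2^m) / 2^(2*N)) \<longlonglongrightarrow> -1/3"
  unfolding sum_alt_even pow2N by real_asymp
lemma L4: "(\<lambda>N. (\<Sum>m<2*N+1. 1 * (-1::real)^m * 2^m) / 2^(2*N+1)) \<longlonglongrightarrow> 1/3"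
  unfolding sum_alt_odd pow2N1 by real_asymp

lemma sm_even: "strict_mono (\<lambda>N::nat. 2*N)" by (rule strict_monoI) simp
lemma sm_odd: "strict_mono (\<lambda>N::nat. 2*N+1)" by (rule strict_monoI) simp

lemma b1: "\<bar>1 + (-1::real)^m\<bar> \<le> 2" by (cases "even m") auto
lemma b2: "\<bar>(-1::real)^m\<bar> \<le> 2" by simp
lemma b3: "\<bar>1::real\<bar> \<le> 2" by simp

lemma parts:
  assumes t: "0 \<le> t" "t \<le> 1"
  shows "(\<lambda>n. qv_sum (dyadic (2*n)) (\<lambda>s. xhat s + yfun s) t) \<longlonglongrightarrow> 4/3 * t"
    and "(\<lambda>n. qv_sum (dyadic (2*n+1)) (\<lambda>s. xhat s + yfun s) t) \<longlonglongrightarrow> 8/3 * t"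
    and "(\<lambda>n. cv_sum (dyadic (2*n)) xhat yfun t) \<longlonglongrightarrow> -1/3 * t"
    and "(\<lambda>n. cv_sum (dyadic (2*n+1)) xhat yfun t) \<longlonglongrightarrow> 1/3 * t"
proof -
  show "(\<lambda>n. qv_sum (dyadic (2*n)) (\<lambda>s. xhat s + yfun s) t) \<longlonglongrightarrow> 4/3 * t"
    unfolding qv_D[OF t] using lim_gen[OF b1 b1 t sm_even L1] by (simp add: mult.commute)
  show "(\<lambda>n. qv_sum (dyadic (2*n+1)) (\<lambda>s. xhat s + yfun s) t) \<longlonglongrightarrow> 8/3 * t"
    unfolding qv_D[OF t] using lim_gen[OF b1 b1 t sm_odd L2] by (simp add: mult.commute)
  show "(\<lambda>n. cv_sum (dyadic (2*n)) xhat yfun t) \<longlonglongrightarrow> -1/3 * t"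
    unfolding cv_D[OF t] using lim_gen[OF b3 b2 t sm_even L3] by (simp add: mult.commute)
  show "(\<lambda>n. cv_sum (dyadic (2*n+1)) xhat yfun t) \<longlonglongrightarrow> 1/3 * t"
    unfolding cv_D[OF t] using lim_gen[OF b3 b2 t sm_odd L4] by (simp add: mult.commute)
qed

lemma not_conv:
  assumes "(\<lambda>n. X (2*n)) \<longlonglongrightarrow> (a::real)" "(\<lambda>n. X (2*n+1)) \<longlonglongrightarrow> b" "a \<noteq> b"
  shows "\<not> convergent X"
proof
  assume "convergent X"
  then obtain L where L: "X \<longlonglongrightarrow> L" by (auto simp: convergent_def)
  have "(\<lambda>n. X (2*n)) \<longlonglongrightarrow> L" using LIMSEQ_subseq_LIMSEQ[OF L sm_even] by (simp add: o_def)
  then have "a = L" using assms(1) LIMSEQ_unique by blast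
  moreover have "(\<lambda>n. X (2*n+1)) \<longlonglongrightarrow> L" using LIMSEQ_subseq_LIMSEQ[OF L sm_odd] by (simp add: o_def)
  then have "b = L" using assms(2) LIMSEQ_unique by blast
  ultimately show False using assms(3) by simp
qed

theorem proposition2p7:
  shows "(\<forall>t\<in>{0..1}.
            (\<lambda>n. qv_sum (dyadic (2*n)) (\<lambda>s. xhat s + yfun s) t) \<longlonglongrightarrow> 4/3 * t
          \<and> (\<lambda>n. qv_sum (dyadic (2*n+1)) (\<lambda>s. xhat s + yfun s) t) \<longlonglongrightarrow> 8/3 * t
          \<and> (\<lambda>n. cv_sum (dyadic (2*n)) xhat yfun t) \<longlonglongrightarrow> -1/3 * t
          \<and> (\<lambda>n. cv_sum (dyadic (2*n+1)) xhat yfun t) \<longlonglongrightarrow> 1/3 * t)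
       \<and> (\<forall>t\<in>{0<..1}.
            \<not> convergent (\<lambda>n. qv_sum (dyadic n) (\<lambda>s. xhat s + yfun s) t)
          \<and> \<not> convergent (\<lambda>n. cv_sum (dyadic n) xhat yfun t))
       \<and> admits_cqv (\<lambda>n. dyadic (2*n)) (\<lambda>s. xhat s + yfun s) (\<lambda>t. 4/3 * t)
       \<and> admits_cqv (\<lambda>n. dyadic (2*n+1)) (\<lambda>s. xhat s + yfun s) (\<lambda>t. 8/3 * t)"
proof (intro conjI ballI)
  fix t :: real assume "t \<in> {0..1}"
  then have t: "0 \<le> t" "t \<le> 1" by auto
  show "(\<lambda>n. qv_sum (dyadic (2*n)) (\<lambda>s. xhat s + yfun s) t) \<longlonglongrightarrow> 4/3 * t" by (rule parts(1)[OF t])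
  show "(\<lambda>n. qv_sum (dyadic (2*n+1)) (\<lambda>s. xhat s + yfun s) t) \<longlonglongrightarrow> 8/3 * t" by (rule parts(2)[OF t])
  show "(\<lambda>n. cv_sum (dyadic (2*n)) xhat yfun t) \<longlonglongrightarrow> -1/3 * t" by (rule parts(3)[OF t])
  show "(\<lambda>n. cv_sum (dyadic (2*n+1)) xhat yfun t) \<longlonglongrightarrow> 1/3 * t" by (rule parts(4)[OF t])
next
  fix t :: real assume "t \<in> {0<..1}"
  then have t: "0 \<le> t" "t \<le> 1" "t > 0" by auto
  show "\<not> convergent (\<lambda>n. qv_sum (dyadic n) (\<lambda>s. xhat s + yfun s) t)"
    by (rule not_conv[OF parts(1)[OF t(1,2)] parts(2)[OF t(1,2)]]) (use t in simp)
  show "\<not> convergent (\<lambda>n. cv_sum (dyadic n) xhat yfun t)"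
    by (rule not_conv[OF parts(3)[OF t(1,2)] parts(4)[OF t(1,2)]]) (use t in simp)
next
  show "admits_cqv (\<lambda>n. dyadic (2*n)) (\<lambda>s. xhat s + yfun s) (\<lambda>t. 4/3 * t)"
    unfolding admits_cqv_def using parts(1)
    by (auto intro!: continuous_intros)
  show "admits_cqv (\<lambda>n. dyadic (2*n+1)) (\<lambda>s. xhat s + yfun s) (\<lambda>t. 8/3 * t)"
    unfolding admits_cqv_def using parts(2)
    by (auto intro!: continuous_intros)
qed


end
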